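(* Let $S\subseteq\{(i,j)\in[n]\times[n]:i<j\}$ be such that $U_S:=\{I_n+\sum_{(i,j)\in S}a_{ij}E_{ij}: a_{ij}\in\mathbb F\}$ is a subgroup of $U_n$. Then $U_S$ is generated by $\{I_n+\lambda E_{ij}:(i,j)\in S,\ \lambda\in\mathbb F\}$, and every element of $U_S$ is a product of at most $|S|$ elements of this set.
   Context: $\mathbb F$ is a field; $[n]=\{1,\dots,n\}$; $U_n$ is the group of $n\times n$ upper triangular matrices over $\mathbb F$ with all diagonal entries $1$; $E_{ij}$ is the matrix unit. *)

theory Defs
  imports "HOL-Analysis.Analysis"
begin

text \<open>Square matrices over a field 'a indexed by a finite linearly ordered type 'n
  (standing for [n] with its usual order).\<close>

definition Eij :: "'n::finite \<Rightarrow> 'n \<Rightarrow> 'a::field^'n^'n" where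
  "Eij i j = (\<chi> k l. if k = i \<and> l = j then 1 else 0)"

definition scaleM :: "'a::field \<Rightarrow> 'a^'n^'m \<Rightarrow> 'a^'n^'m" where
  "scaleM c A = (\<chi> k l. c * A $ k $ l)"

definition UT :: "('a::field^('n::{finite,linorder})^('n::{finite,linorder})) set" where
  "UT = {A. (\<forall>i. A $ i $ i = 1) \<and> (\<forall>i j. j < i \<longrightarrow> A $ i $ j = 0)}"

definition US :: "('n::{finite,linorder} \<times> 'n::{finite,linorder}) set \<Rightarrow> ('a::field^('n::{finite,linorder})^('n::{finite,linorder})) set" where
  "US S = {mat 1 + (\<Sum>(i,j)\<in>S. scaleM (a i j) (Eij i j)) | a. True}"

definition is_subgroup :: "('a::field^'n::finite^'n) set \<Rightarrow> ('a^'n^'n) set \<Rightarrow> bool" where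
  "is_subgroup H G \<longleftrightarrow> H \<subseteq> G \<and> mat 1 \<in> H \<and>
     (\<forall>x\<in>H. \<forall>y\<in>H. x ** y \<in> H) \<and> (\<forall>x\<in>H. invertible x \<and> matrix_inv x \<in> H)"

inductive_set gen_group :: "('a::field^'n::finite^'n) set \<Rightarrow> ('a^'n^'n) set" for X where
  gen_one: "mat 1 \<in> gen_group X"
| gen_incl: "x \<in> X \<Longrightarrow> x \<in> gen_group X"
| gen_mult: "x \<in> gen_group X \<Longrightarrow> y \<in> gen_group X \<Longrightarrow> x ** y \<in> gen_group X"
| gen_inv: "x \<in> gen_group X \<Longrightarrow> matrix_inv x \<in> gen_group X"

definition gens :: "('n::finite \<times> 'n) set \<Rightarrow> ('a::field^'n^'n) set" where
  "gens S = {mat 1 + scaleM c (Eij i j) | i j c. (i,j) \<in> S}"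

definition mprod :: "('a::field^'n::finite^'n) list \<Rightarrow> 'a^'n^'n" where
  "mprod xs = foldr (**) xs (mat 1)"

end

theory Submission
  imports Defs
begin

lemma sum_entry:
  "(\<Sum>(i,j)\<in>S. scaleM (a i j) (Eij i j :: 'a::field^'n::finite^'n)) $ k $ l
     = (if (k,l)\<in>S then a k l else 0)"
proof -
  have "(\<Sum>(i,j)\<in>S. scaleM (a i j) (Eij i j :: 'a::field^'n::finite^'n)) $ k $ l
      = (\<Sum>p\<in>S. (if p = (k,l) then a k l else 0))"
    unfolding sum_component
    by (rule sum.cong) (auto simp: scaleM_def Eij_def split: if_split_asm)
  also have "\<dots> = (if (k,l)\<in>S then a k l else 0)"
    by (simp add: sum.delta')
  finally show ?thesis .
qed

lemma US_iff:
  fixes A :: "'a::field^('n::{finite,linorder})^('n::{finite,linorder})"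
  assumes "S \<subseteq> {(i,j). i<j}"
  shows "A \<in> US S \<longleftrightarrow>
     (\<forall>k. A$k$k = 1) \<and> (\<forall>k l. k\<noteq>l \<and> (k,l)\<notin>S \<longrightarrow> A$k$l = 0)"
proof
  assume "A \<in> US S"
  then obtain a where A: "A = mat 1 + (\<Sum>(i,j)\<in>S. scaleM (a i j) (Eij i j))"
    unfolding US_def by blast
  have e: "A$k$l = (if k = l then 1 else 0) + (if (k,l)\<in>S then a k l else 0)" for k l
    unfolding A by (simp only: vector_add_component sum_entry) (simp add: mat_def)
  show "(\<forall>k. A$k$k = 1) \<and> (\<forall>k l. k\<noteq>l \<and> (k,l)\<notin>S \<longrightarrow> A$k$l = 0)"
    using assms by (auto simp: e)
next
  assume h: "(\<forall>k. A$k$k = 1) \<and> (\<forall>k l. k\<noteq>l \<and> (k,l)\<notin>S \<longrightarrow> A$k$l = 0)"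
  have "A = mat 1 + (\<Sum>(i,j)\<in>S. scaleM (A$i$j) (Eij i j))"
  proof (subst vec_eq_iff, intro allI, subst vec_eq_iff, intro allI)
    fix k l
    show "A$k$l = (mat 1 + (\<Sum>(i,j)\<in>S. scaleM (A$i$j) (Eij i j)))$k$l"
      using h assms by (simp only: vector_add_component sum_entry) (auto simp: mat_def)
  qed
  then show "A \<in> US S" unfolding US_def
    by (intro CollectI exI[of _ "\<lambda>i j. A$i$j"]) simp
qed

lemma mult_gen_entry:
  "((A::'a::field^'n::finite^'n) ** (mat 1 + scaleM c (Eij i j))) $ k $ l
     = A$k$l + (if l = j then c * A$k$i else 0)"
proof -
  have "(A ** scaleM c (Eij i j)) $ k $ l = (\<Sum>m\<in>UNIV. A$k$m * (c * (if m = i \<and> l = j then 1 else 0)))"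
    by (simp add: matrix_matrix_mult_def scaleM_def Eij_def)
  also have "\<dots> = (if l = j then c * A$k$i else 0)"
    by (cases "l = j") (simp_all add: if_distrib sum.delta' mult.commute cong: if_cong)
  finally show ?thesis
    by (simp add: matrix_add_ldistrib)
qed

lemma mprod_foldr: "foldr (**) xs M = mprod xs ** (M::'a::field^'n::finite^'n)"
  by (induction xs) (simp_all add: mprod_def matrix_mul_assoc)

lemma mprod_snoc: "mprod (xs @ [g]) = mprod xs ** (g::'a::field^'n::finite^'n)"
proof -
  have "mprod (xs @ [g]) = foldr (**) xs g" by (simp add: mprod_def)
  also have "\<dots> = mprod xs ** g" by (rule mprod_foldr)
  finally show ?thesis .
qed

lemma mprod_gen: "set xs \<subseteq> X \<Longrightarrow> mprod xs \<in> gen_group (X::('a::field^'n::finite^'n) set)"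
proof (induction xs)
  case Nil then show ?case by (simp add: mprod_def gen_group.gen_one)
next
  case (Cons x xs)
  then have "x \<in> gen_group X" "mprod xs \<in> gen_group X" by (auto intro: gen_group.gen_incl)
  then show ?case by (simp add: mprod_def gen_group.gen_mult)
qed

lemma gens_sub:
  fixes S :: "('n::{finite,linorder} \<times> 'n::{finite,linorder}) set"
  assumes up: "S \<subseteq> {(i,j). i<j}"
  shows "gens S \<subseteq> (US S :: ('a::field^('n::{finite,linorder})^('n::{finite,linorder})) set)"
proof
  fix x :: "'a::field^('n::{finite,linorder})^('n::{finite,linorder})"
  assume "x \<in> gens S"
  then obtain i j c where x: "x = mat 1 + scaleM c (Eij i j)" and ij: "(i,j) \<in> S"
    unfolding gens_def by blast
  have "i < j" using ij up by auto
  then show "x \<in> US S" unfolding US_iff[OF up] x using ij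
    by (auto simp: mat_def scaleM_def Eij_def)
qed

lemma gen_sub:
  fixes S :: "('n::{finite,linorder} \<times> 'n::{finite,linorder}) set"
  assumes up: "S \<subseteq> {(i,j). i<j}"
    and sg: "is_subgroup (US S :: ('a::field^('n::{finite,linorder})^('n::{finite,linorder})) set) UT"
  shows "gen_group (gens S) \<subseteq> (US S :: ('a::field^('n::{finite,linorder})^('n::{finite,linorder})) set)"
proof
  fix x :: "'a::field^('n::{finite,linorder})^('n::{finite,linorder})"
  assume "x \<in> gen_group (gens S)"
  then show "x \<in> US S"
  proof (induction rule: gen_group.induct)
    case gen_one then show ?case using sg unfolding is_subgroup_def by blast
  next
    case (gen_incl x) then show ?case using gens_sub[OF up] by blast
  next
    case (gen_mult x y) then show ?case using sg unfolding is_subgroup_def by blast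
  next
    case (gen_inv x) then show ?case using sg unfolding is_subgroup_def by blast
  qed
qed

lemma main:
  fixes S :: "('n::{finite,linorder} \<times> 'n::{finite,linorder}) set"
  assumes up: "S \<subseteq> {(i,j). i<j}"
    and sg: "is_subgroup (US S :: ('a::field^('n::{finite,linorder})^('n::{finite,linorder})) set) UT"
  shows "card T = m \<Longrightarrow> T \<subseteq> S \<Longrightarrow> (\<forall>i j k. (i,j)\<in>T \<longrightarrow> (k,j)\<in>S \<longrightarrow> k<i \<longrightarrow> (k,j)\<in>T)
    \<Longrightarrow> (A::'a::field^('n::{finite,linorder})^('n::{finite,linorder})) \<in> US S
    \<Longrightarrow> (\<forall>k l. (k,l)\<in>S-T \<longrightarrow> A$k$l = 0)
    \<Longrightarrow> \<exists>xs. set xs \<subseteq> gens S \<and> length xs \<le> card T \<and> A = mprod xs"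
proof (induction m arbitrary: T A)
  case 0
  then have T: "T = {}" by simp
  have "A = mat 1"
  proof (subst vec_eq_iff, intro allI, subst vec_eq_iff, intro allI)
    fix k l
    show "A$k$l = mat 1 $k$l"
      using 0(4,5) unfolding US_iff[OF up] T by (cases "k = l"; cases "(k,l) \<in> S") (auto simp: mat_def)
  qed
  then show ?case by (intro exI[of _ "[]"]) (simp add: mprod_def)
next
  case (Suc m)
  have fin: "finite T" by simp
  have ne: "T \<noteq> {}" using Suc.prems(1) by auto
  define i where "i = Max (fst ` T)"
  have "i \<in> fst ` T" unfolding i_def using fin ne by (intro Max_in) auto
  then obtain j where ijT: "(i,j) \<in> T" by force
  have imax: "\<And>p q. (p,q) \<in> T \<Longrightarrow> p \<le> i"
    unfolding i_def using fin by (metis Max_ge finite_imageI fst_conv image_eqI)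
  have ijS: "(i,j) \<in> S" using ijT Suc.prems(2) by blast
  have ij: "i < j" using ijS up by auto
  define T' where "T' = T - {(i,j)}"
  have cT': "card T' = m" unfolding T'_def using Suc.prems(1) ijT by simp
  define a where "a = A$i$j"
  define G' :: "'a^('n::{finite,linorder})^('n::{finite,linorder})"
    where "G' = mat 1 + scaleM (-a) (Eij i j)"
  define G :: "'a^('n::{finite,linorder})^('n::{finite,linorder})"
    where "G = mat 1 + scaleM a (Eij i j)"
  have G'g: "G' \<in> gens S" unfolding G'_def gens_def using ijS by blast
  have Gg: "G \<in> gens S" unfolding G_def gens_def using ijS by blast
  define B where "B = A ** G'"
  have BUS: "B \<in> US S" unfolding B_def
    using sg Suc.prems(4) G'g gens_sub[OF up] unfolding is_subgroup_def by blast
  have Be: "B$k$l = A$k$l + (if l = j then -a * A$k$i else 0)" for k l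
    unfolding B_def G'_def by (rule mult_gen_entry)
  have Adiag: "A$k$k = 1" for k using Suc.prems(4) unfolding US_iff[OF up] by blast
  have Aoff: "k \<noteq> l \<Longrightarrow> (k,l) \<notin> S \<Longrightarrow> A$k$l = 0" for k l
    using Suc.prems(4) unfolding US_iff[OF up] by blast
  have down: "\<forall>i j k. (i,j)\<in>T' \<longrightarrow> (k,j)\<in>S \<longrightarrow> k<i \<longrightarrow> (k,j)\<in>T'"
  proof (intro allI impI)
    fix p q k assume h: "(p,q)\<in>T'" "(k,q)\<in>S" "k<p"
    then have "(k,q) \<in> T" using Suc.prems(3) unfolding T'_def by blast
    moreover have "p \<le> i" using h(1) imax unfolding T'_def by blast
    ultimately show "(k,q)\<in>T'" using h(3) unfolding T'_def by auto
  qed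
  have zero: "\<forall>k l. (k,l)\<in>S-T' \<longrightarrow> B$k$l = 0"
  proof (intro allI impI)
    fix k l assume h: "(k,l) \<in> S - T'"
    show "B$k$l = 0"
    proof (cases "(k,l) = (i,j)")
      case True then show ?thesis using Be Adiag a_def by simp
    next
      case False
      then have kl: "(k,l) \<in> S - T" using h unfolding T'_def by blast
      then have A0: "A$k$l = 0" using Suc.prems(5) by blast
      show ?thesis
      proof (cases "l = j")
        case False then show ?thesis using Be A0 by simp
      next
        case lj: True
        have "A$k$i = 0"
        proof (cases "k = i")
          case True then show ?thesis using lj \<open>(k,l) \<noteq> (i,j)\<close> by simp
        next
          case ki: False
          show ?thesis
          proof (cases "(k,i) \<in> S")
            case True
            then have "k < i" using up by auto
            then have "(k,j) \<in> T" using Suc.prems(3) ijT kl lj by blast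
            then show ?thesis using kl lj by blast
          next
            case False then show ?thesis using Aoff ki by blast
          qed
        qed
        then show ?thesis using Be A0 by simp
      qed
    qed
  qed
  have T'S: "T' \<subseteq> S" using Suc.prems(2) unfolding T'_def by blast
  obtain xs where xs: "set xs \<subseteq> gens S" "length xs \<le> card T'" "B = mprod xs"
    using Suc.IH[OF cT' T'S down BUS zero] by blast
  have GG: "G' ** G = mat 1"
  proof (subst vec_eq_iff, intro allI, subst vec_eq_iff, intro allI)
    fix k l
    show "(G' ** G)$k$l = mat 1 $k$l"
      unfolding G_def mult_gen_entry using ij
      by (auto simp: G'_def mat_def scaleM_def Eij_def)
  qed
  have "A = B ** G" unfolding B_def matrix_mul_assoc[symmetric] GG by simp
  then have "A = mprod (xs @ [G])" using xs(3) by (simp add: mprod_snoc)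
  moreover have "set (xs @ [G]) \<subseteq> gens S" using xs(1) Gg by simp
  moreover have "length (xs @ [G]) \<le> card T" using xs(2) cT' Suc.prems(1) by simp
  ultimately show ?case by blast
qed

theorem lemma2p13:
  fixes S :: "('n::{finite,linorder} \<times> 'n::{finite,linorder}) set"
  assumes "S \<subseteq> {(i,j). i < j}"
    and "is_subgroup (US S :: ('a::field^('n::{finite,linorder})^('n::{finite,linorder})) set) UT"
  shows "US S = gen_group (gens S :: ('a::field^('n::{finite,linorder})^('n::{finite,linorder})) set)
    \<and> (\<forall>A \<in> (US S :: ('a::field^('n::{finite,linorder})^('n::{finite,linorder})) set).
         \<exists>xs. set xs \<subseteq> gens S \<and> length xs \<le> card S \<and> A = mprod xs)"
proof -
  have fact: "\<exists>xs. set xs \<subseteq> gens S \<and> length xs \<le> card S \<and> A = mprod xs"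
    if A: "A \<in> (US S :: ('a::field^('n::{finite,linorder})^('n::{finite,linorder})) set)" for A
  proof -
    have d: "\<forall>i j k. (i,j)\<in>S \<longrightarrow> (k,j)\<in>S \<longrightarrow> k<i \<longrightarrow> (k,j)\<in>S" by simp
    have z: "\<forall>k l. (k,l)\<in>S-S \<longrightarrow> A$k$l = 0" by simp
    show ?thesis by (rule main[OF assms refl subset_refl d A z])
  qed
  have sub: "US S \<subseteq> gen_group (gens S :: ('a::field^('n::{finite,linorder})^('n::{finite,linorder})) set)"
  proof
    fix A :: "'a::field^('n::{finite,linorder})^('n::{finite,linorder})"
    assume "A \<in> US S"
    then obtain xs where "set xs \<subseteq> gens S" "A = mprod xs" using fact by blast
    then show "A \<in> gen_group (gens S)" using mprod_gen by metis
  qed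
  have "US S = gen_group (gens S :: ('a::field^('n::{finite,linorder})^('n::{finite,linorder})) set)"
    by (rule subset_antisym[OF sub gen_sub[OF assms]])
  then show ?thesis using fact by blast
qed

end
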